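(* For both the JC model and the K2P model, the linear polynomial $f=q_{GGGG}+q_{GTGT}-q_{GGTT}-q_{GTTG}$ satisfies $f\in\mathcal{I}(V_{T_{12|34}}\ast V_{T_{14|23}})\setminus\mathcal{I}(V_{T_{13|24}})$.
   Context: $T_{12|34}$, $T_{13|24}$, $T_{14|23}$ denote the three unrooted binary trees on leaves $\{1,2,3,4\}$, indexed by their nontrivial split; $\Sigma(T)$ is the set of all splits of $T$ (four trivial plus the nontrivial one). With $G=\mathbb{Z}_2\times\mathbb{Z}_2$ and nucleotide labels $A=(0,0)$, $C=(0,1)$, $G=(1,0)$, $T=(1,1)$, the K3P model on $T$ in Fourier coordinates $q_{g_1g_2g_3g_4}$ ($g_i\in G$) is $q_{g_1g_2g_3g_4}=\prod_{A|B\in\Sigma(T)}a^{A|B}_{\sum_{i\in A}g_i}$ if $\sum_i g_i=0$ and $0$ otherwise; K2P imposes $a^e_G=a^e_T$ and JC imposes $a^e_C=a^e_G=a^e_T$ for all splits $e$. $V_T$ is the Zariski closure in $\mathbb{P}^{255}$ of the image for complex parameters; $V\ast W$ is the join (closure of all lines meeting $V$ and $W$); $\mathcal{I}(V)$ is the ideal of polynomials in the $q$'s vanishing on $V$. *)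

theory Defs
  imports Complex_Main "HOL-Library.Poly_Mapping"
begin

text \<open>Nucleotides, identified with Z2 x Z2: A=(0,0), C=(0,1), G=(1,0), T=(1,1).\<close>
datatype nuc = A | C | G | T

fun nuc_pair :: "nuc \<Rightarrow> bool \<times> bool" where
  "nuc_pair A = (False, False)"
| "nuc_pair C = (False, True)"
| "nuc_pair G = (True, False)"
| "nuc_pair T = (True, True)"

definition pair_nuc :: "bool \<times> bool \<Rightarrow> nuc" where
  "pair_nuc p = (THE n. nuc_pair n = p)"

definition nadd :: "nuc \<Rightarrow> nuc \<Rightarrow> nuc" where
  "nadd x y = pair_nuc (fst (nuc_pair x) \<noteq> fst (nuc_pair y), snd (nuc_pair x) \<noteq> snd (nuc_pair y))"

text \<open>Fourier coordinates q_{g1 g2 g3 g4} are indexed by 4-tuples of group elements.\<close>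
type_synonym idx = "nuc \<times> nuc \<times> nuc \<times> nuc"

fun leaf :: "idx \<Rightarrow> nat \<Rightarrow> nuc" where
  "leaf (g1, g2, g3, g4) i = (if i = 1 then g1 else if i = 2 then g2 else if i = 3 then g3 else g4)"

definition leaves :: "nat set" where "leaves = {1, 2, 3, 4}"

definition gsum :: "nat set \<Rightarrow> idx \<Rightarrow> nuc" where
  "gsum S g = foldr nadd (map (leaf g) (filter (\<lambda>i. i \<in> S) [1, 2, 3, 4])) A"

definition split_of :: "nat set \<Rightarrow> nat set set" where
  "split_of S = {S, leaves - S}"

text \<open>A tree on 4 leaves is given by (one side X of) its nontrivial split; the sides
  listed below are one side of each of the five splits in Sigma(T).\<close>
definition split_sides :: "nat set \<Rightarrow> nat set set" where
  "split_sides X = {{1}, {2}, {3}, {4}, X}"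

definition Sigma_T :: "nat set \<Rightarrow> nat set set set" where
  "Sigma_T X = split_of ` split_sides X"

text \<open>Parametrisation of the K3P model in Fourier coordinates; the parameters are
  a e g = a^e_g for a split e and a group element g.\<close>
definition param :: "nat set \<Rightarrow> (nat set set \<Rightarrow> nuc \<Rightarrow> complex) \<Rightarrow> idx \<Rightarrow> complex" where
  "param X a g = (if gsum leaves g = A
                   then (\<Prod>S\<in>split_sides X. a (split_of S) (gsum S g)) else 0)"

datatype model = K3P | K2P | JC

definition admissible :: "model \<Rightarrow> (nat set set \<Rightarrow> nuc \<Rightarrow> complex) \<Rightarrow> bool" where
  "admissible M a = (case M of
      K3P \<Rightarrow> True
    | K2P \<Rightarrow> (\<forall>e. a e G = a e T)
    | JC \<Rightarrow> (\<forall>e. a e C = a e G \<and> a e G = a e T))"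

type_synonym qpoly = "(idx \<Rightarrow>\<^sub>0 nat) \<Rightarrow>\<^sub>0 complex"

definition peval :: "qpoly \<Rightarrow> (idx \<Rightarrow> complex) \<Rightarrow> complex" where
  "peval p x = (\<Sum>mon\<in>Poly_Mapping.keys p. Poly_Mapping.lookup p mon * (\<Prod>w\<in>Poly_Mapping.keys (mon::idx \<Rightarrow>\<^sub>0 nat). x w ^ Poly_Mapping.lookup mon w))"

definition qvar :: "idx \<Rightarrow> qpoly" where
  "qvar v = Poly_Mapping.single (Poly_Mapping.single v 1) 1"

definition vanishing_ideal :: "(idx \<Rightarrow> complex) set \<Rightarrow> qpoly set" where
  "vanishing_ideal S = {p. \<forall>x\<in>S. peval p x = 0}"

definition zariski_closure :: "(idx \<Rightarrow> complex) set \<Rightarrow> (idx \<Rightarrow> complex) set" where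
  "zariski_closure S = {x. \<forall>p\<in>vanishing_ideal S. peval p x = 0}"

text \<open>Affine cone (in C^256) of the projective variety V_T of model M.\<close>
definition V_T :: "model \<Rightarrow> nat set \<Rightarrow> (idx \<Rightarrow> complex) set" where
  "V_T M X = zariski_closure {param X a | a. admissible M a}"

text \<open>Affine cone of the join of two projective varieties, given by their affine cones.\<close>
definition join :: "(idx \<Rightarrow> complex) set \<Rightarrow> (idx \<Rightarrow> complex) set \<Rightarrow> (idx \<Rightarrow> complex) set" where
  "join V W = zariski_closure {(\<lambda>i. x i + y i) | x y. x \<in> V \<and> y \<in> W}"

end

theory Submission
  imports Defs
begin

definition mono_ev :: "(idx \<Rightarrow>\<^sub>0 nat) \<Rightarrow> (idx \<Rightarrow> complex) \<Rightarrow> complex" where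
  "mono_ev mon x = (\<Prod>w\<in>Poly_Mapping.keys mon. x w ^ Poly_Mapping.lookup mon w)"

lemma peval_sup:
  assumes "finite S" "Poly_Mapping.keys p \<subseteq> S"
  shows "peval p x = (\<Sum>mon\<in>S. Poly_Mapping.lookup p mon * mono_ev mon x)"
  unfolding peval_def mono_ev_def
  by (rule sum.mono_neutral_left) (use assms in \<open>auto simp: in_keys_iff\<close>)

lemma peval_add: "peval (p + q) x = peval p x + peval q x"
proof -
  let ?S = "Poly_Mapping.keys p \<union> Poly_Mapping.keys q"
  have "peval (p + q) x = (\<Sum>mon\<in>?S. Poly_Mapping.lookup (p+q) mon * mono_ev mon x)"
    by (rule peval_sup) (use keys_add[of p q] in auto)
  also have "\<dots> = (\<Sum>mon\<in>?S. Poly_Mapping.lookup p mon * mono_ev mon x)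
      + (\<Sum>mon\<in>?S. Poly_Mapping.lookup q mon * mono_ev mon x)"
    by (simp add: lookup_add distrib_right sum.distrib)
  also have "\<dots> = peval p x + peval q x"
    by (subst (1 2) peval_sup[of ?S]) auto
  finally show ?thesis .
qed

lemma peval_diff: "peval (p - q) x = peval p x - peval q x"
proof -
  let ?S = "Poly_Mapping.keys p \<union> Poly_Mapping.keys q"
  have "peval (p - q) x = (\<Sum>mon\<in>?S. Poly_Mapping.lookup (p-q) mon * mono_ev mon x)"
    by (rule peval_sup) (use keys_diff[of p q] in auto)
  also have "\<dots> = (\<Sum>mon\<in>?S. Poly_Mapping.lookup p mon * mono_ev mon x)
      - (\<Sum>mon\<in>?S. Poly_Mapping.lookup q mon * mono_ev mon x)"
    by (simp add: lookup_minus left_diff_distrib sum_subtractf)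
  also have "\<dots> = peval p x - peval q x"
    by (subst (1 2) peval_sup[of ?S]) auto
  finally show ?thesis .
qed

lemma peval_qvar: "peval (qvar v) x = x v"
  unfolding peval_def qvar_def by simp

lemma pair_nuc_simps [simp]:
  "pair_nuc (False, False) = A" "pair_nuc (False, True) = C"
  "pair_nuc (True, False) = G" "pair_nuc (True, True) = T"
  unfolding pair_nuc_def
  by (rule the_equality; (simp; fail)?; case_tac n; simp)+

lemma closure_sub: "S \<subseteq> zariski_closure S"
  unfolding zariski_closure_def vanishing_ideal_def by auto

lemma vanish_closure: "p \<in> vanishing_ideal S \<Longrightarrow> p \<in> vanishing_ideal (zariski_closure S)"
  unfolding zariski_closure_def vanishing_ideal_def by auto

definition fv :: "(idx \<Rightarrow> complex) \<Rightarrow> complex" where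
  "fv x = x (G,G,G,G) + x (G,T,G,T) - x (G,G,T,T) - x (G,T,T,G)"

lemma split_sides_12: "split_sides {1,2} = {{1},{2},{3},{4},{1,2}}" by (simp add: split_sides_def)

lemma prod12: "(\<Prod>S\<in>split_sides {1,2}. h S) = h {1} * h {2} * h {3} * h {4} * h {1,2}"
  unfolding split_sides_def by (simp add: insert_commute mult_ac)
lemma prod14: "(\<Prod>S\<in>split_sides {1,4}. h S) = h {1} * h {2} * h {3} * h {4} * h {1,4}"
  unfolding split_sides_def by (simp add: insert_commute mult_ac)
lemma prod13: "(\<Prod>S\<in>split_sides {1,3}. h S) = h {1} * h {2} * h {3} * h {4} * h {1,3}"
  unfolding split_sides_def by (simp add: insert_commute mult_ac)

lemma fv12: "(\<And>e. a e T = a e G) \<Longrightarrow> fv (param {1,2} a) = 0"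
  unfolding fv_def param_def prod12 by (simp add: gsum_def leaves_def nadd_def)
lemma fv14: "(\<And>e. a e T = a e G) \<Longrightarrow> fv (param {1,4} a) = 0"
  unfolding fv_def param_def prod14 by (simp add: gsum_def leaves_def nadd_def)

definition a13 :: "nat set set \<Rightarrow> nuc \<Rightarrow> complex" where
  "a13 e g = (if e = split_of {1,3} \<and> g \<noteq> A then 0 else 1)"

lemma s13: "split_of {1,3} = {{1,3},{2,4}}"
  unfolding split_of_def leaves_def by auto
lemma sne: "X \<in> split_of S \<Longrightarrow> X \<notin> split_of R \<Longrightarrow> split_of S \<noteq> split_of R" by auto

lemma wit: "(a::nat) \<in> Y \<Longrightarrow> a \<notin> Z \<Longrightarrow> Z \<noteq> Y" by auto

lemma ne1: "split_of {1} \<noteq> split_of {1,3}"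
proof (rule sne[of "{1}"])
  show "{1} \<in> split_of {1}" by (simp add: split_of_def)
  have "{1::nat} \<noteq> {1,3}" by (rule wit[of 3]) auto
  moreover have "{1::nat} \<noteq> {2,4}" by (rule wit[of 2]) auto
  ultimately show "{1} \<notin> split_of {1,3}" unfolding s13 by blast
qed
lemma ne2: "split_of {2} \<noteq> split_of {1,3}"
proof (rule sne[of "{2}"])
  show "{2} \<in> split_of {2}" by (simp add: split_of_def)
  have "{2::nat} \<noteq> {1,3}" by (rule wit[of 1]) auto
  moreover have "{2::nat} \<noteq> {2,4}" by (rule wit[of 4]) auto
  ultimately show "{2} \<notin> split_of {1,3}" unfolding s13 by blast
qed
lemma ne3: "split_of {3} \<noteq> split_of {1,3}"
proof (rule sne[of "{3}"])
  show "{3} \<in> split_of {3}" by (simp add: split_of_def)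
  have "{3::nat} \<noteq> {1,3}" by (rule wit[of 1]) auto
  moreover have "{3::nat} \<noteq> {2,4}" by (rule wit[of 2]) auto
  ultimately show "{3} \<notin> split_of {1,3}" unfolding s13 by blast
qed
lemma ne4: "split_of {4} \<noteq> split_of {1,3}"
proof (rule sne[of "{4}"])
  show "{4} \<in> split_of {4}" by (simp add: split_of_def)
  have "{4::nat} \<noteq> {1,3}" by (rule wit[of 1]) auto
  moreover have "{4::nat} \<noteq> {2,4}" by (rule wit[of 2]) auto
  ultimately show "{4} \<notin> split_of {1,3}" unfolding s13 by blast
qed

lemma a13_1: "a13 (split_of {1}) g = 1" "a13 (split_of {2}) g = 1"
  "a13 (split_of {3}) g = 1" "a13 (split_of {4}) g = 1"
  "a13 (split_of {1,3}) g = (if g = A then 1 else 0)"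
  unfolding a13_def using ne1 ne2 ne3 ne4 by auto

lemma fv13: "fv (param {1,3} a13) = 2"
  unfolding fv_def param_def prod13 a13_1
  by (simp add: gsum_def leaves_def nadd_def)

lemma peval_f: "peval (qvar (G, G, G, G) + qvar (G, T, G, T) - qvar (G, G, T, T) - qvar (G, T, T, G)) x = fv x"
  by (simp add: peval_add peval_diff peval_qvar fv_def)

lemma adm_K2P: "M = JC \<or> M = K2P \<Longrightarrow> admissible M a \<Longrightarrow> a e T = a e G"
  by (auto simp: admissible_def)

theorem lemma4:
  fixes M :: model
  assumes "M = JC \<or> M = K2P"
  defines "f \<equiv> qvar (G, G, G, G) + qvar (G, T, G, T) - qvar (G, G, T, T) - qvar (G, T, T, G)"
  shows "f \<in> vanishing_ideal (join (V_T M {1, 2}) (V_T M {1, 4}))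
         \<and> f \<notin> vanishing_ideal (V_T M {1, 3})"
proof
  have pf: "peval f x = fv x" for x unfolding f_def by (rule peval_f)
  have lin: "fv (\<lambda>i. x i + y i) = fv x + fv y" for x y by (simp add: fv_def)
  have v12: "f \<in> vanishing_ideal (V_T M {1,2})" unfolding V_T_def
  proof (rule vanish_closure, unfold vanishing_ideal_def, safe)
    fix a assume "admissible M a"
    then have "\<And>e. a e T = a e G" using adm_K2P[OF assms(1)] by blast
    then show "peval f (param {1,2} a) = 0" unfolding pf by (rule fv12)
  qed
  have v14: "f \<in> vanishing_ideal (V_T M {1,4})" unfolding V_T_def
  proof (rule vanish_closure, unfold vanishing_ideal_def, safe)
    fix a assume "admissible M a"
    then have "\<And>e. a e T = a e G" using adm_K2P[OF assms(1)] by blast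
    then show "peval f (param {1,4} a) = 0" unfolding pf by (rule fv14)
  qed
  show "f \<in> vanishing_ideal (join (V_T M {1, 2}) (V_T M {1, 4}))" unfolding join_def
  proof (rule vanish_closure, unfold vanishing_ideal_def, safe)
    fix x y assume "x \<in> V_T M {1,2}" "y \<in> V_T M {1,4}"
    then have "fv x = 0" "fv y = 0" using v12 v14 unfolding vanishing_ideal_def mem_Collect_eq pf[symmetric] by blast+
    then show "peval f (\<lambda>i. x i + y i) = 0" by (simp add: pf lin)
  qed
  have adm: "admissible M a13" using assms(1) by (auto simp: admissible_def a13_def)
  have "param {1,3} a13 \<in> V_T M {1,3}" unfolding V_T_def
    by (rule subsetD[OF closure_sub]) (use adm in blast)
  moreover have "peval f (param {1,3} a13) \<noteq> 0" unfolding pf fv13 by simp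
  ultimately show "f \<notin> vanishing_ideal (V_T M {1, 3})"
    unfolding vanishing_ideal_def by blast
qed

end
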